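(* Let $G$ be a finite group generated by a set $S$ with $1_G\in S$, let $\gamma$ be an irreducible monomial representation of $G$, and let $A\subset G$ be a normal symmetric set such that $2\operatorname{SpecRad}(\widehat{1_A}(\gamma))>\mathbb{P}_G(S\cdot A)$. Then $\gamma$ is one-dimensional.
   Context: A representation is a homomorphism $\gamma:G\to U_n(\mathbb{C})$; it is monomial if it is induced by a one-dimensional representation of some subgroup $H\le G$ (i.e. its character is the induced character $\lambda^G$ of some homomorphism $\lambda:H\to S^1$). $A$ symmetric means $A=A^{-1}$, normal means $xA=Ax$ for all $x\in G$. $\mathbb{P}_G(E)=|E|/|G|$ and $\mathbb{E}_{x\in G}$ is the average over $G$. The Fourier transform is $\widehat{f}(\gamma):=\mathbb{E}_{x\in G}f(x)\gamma(x)$, and $\operatorname{SpecRad}(M)$ is the largest absolute value of an eigenvalue of the matrix $M$. $S\cdot A=\{sa:s\in S,a\in A\}$. *)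

theory Defs
  imports "HOL-Algebra.Coset" "HOL-Algebra.Generated_Groups"
    "Jordan_Normal_Form.Spectral_Radius" "Jordan_Normal_Form.Schur_Decomposition"
begin

definition unitary_mat :: "nat \<Rightarrow> complex mat \<Rightarrow> bool" where
  "unitary_mat n U \<longleftrightarrow> U \<in> carrier_mat n n \<and> mat_adjoint U * U = 1\<^sub>m n"

definition unitary_rep :: "('g, 'b) monoid_scheme \<Rightarrow> nat \<Rightarrow> ('g \<Rightarrow> complex mat) \<Rightarrow> bool" where
  "unitary_rep G n \<gamma> \<longleftrightarrow>
     (\<forall>x\<in>carrier G. unitary_mat n (\<gamma> x)) \<and>
     (\<forall>x\<in>carrier G. \<forall>y\<in>carrier G. \<gamma> (x \<otimes>\<^bsub>G\<^esub> y) = \<gamma> x * \<gamma> y)"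

definition invariant_subspace :: "('g, 'b) monoid_scheme \<Rightarrow> nat \<Rightarrow> ('g \<Rightarrow> complex mat) \<Rightarrow> complex vec set \<Rightarrow> bool" where
  "invariant_subspace G n \<gamma> W \<longleftrightarrow>
     W \<subseteq> carrier_vec n \<and> 0\<^sub>v n \<in> W \<and>
     (\<forall>v\<in>W. \<forall>w\<in>W. v + w \<in> W) \<and> (\<forall>c. \<forall>v\<in>W. c \<cdot>\<^sub>v v \<in> W) \<and>
     (\<forall>x\<in>carrier G. \<forall>v\<in>W. \<gamma> x *\<^sub>v v \<in> W)"

definition irreducible_rep :: "('g, 'b) monoid_scheme \<Rightarrow> nat \<Rightarrow> ('g \<Rightarrow> complex mat) \<Rightarrow> bool" where
  "irreducible_rep G n \<gamma> \<longleftrightarrow> unitary_rep G n \<gamma> \<and> n > 0 \<and>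
     (\<forall>W. invariant_subspace G n \<gamma> W \<longrightarrow> W = {0\<^sub>v n} \<or> W = carrier_vec n)"

definition mat_trace :: "complex mat \<Rightarrow> complex" where
  "mat_trace M = (\<Sum>i<dim_row M. M $$ (i, i))"

definition induced_char :: "('g, 'b) monoid_scheme \<Rightarrow> 'g set \<Rightarrow> ('g \<Rightarrow> complex) \<Rightarrow> 'g \<Rightarrow> complex" where
  "induced_char G H chi x =
     (1 / of_nat (card H)) *
     (\<Sum>y\<in>carrier G. if inv\<^bsub>G\<^esub> y \<otimes>\<^bsub>G\<^esub> x \<otimes>\<^bsub>G\<^esub> y \<in> H
                     then chi (inv\<^bsub>G\<^esub> y \<otimes>\<^bsub>G\<^esub> x \<otimes>\<^bsub>G\<^esub> y) else 0)"

definition monomial_rep :: "('g, 'b) monoid_scheme \<Rightarrow> nat \<Rightarrow> ('g \<Rightarrow> complex mat) \<Rightarrow> bool" where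
  "monomial_rep G n \<gamma> \<longleftrightarrow>
     (\<exists>H chi. subgroup H G \<and> (\<forall>h\<in>H. cmod (chi h) = 1) \<and>
        (\<forall>a\<in>H. \<forall>b\<in>H. chi (a \<otimes>\<^bsub>G\<^esub> b) = chi a * chi b) \<and>
        (\<forall>x\<in>carrier G. mat_trace (\<gamma> x) = induced_char G H chi x))"

definition fourier :: "('g, 'b) monoid_scheme \<Rightarrow> ('g \<Rightarrow> complex) \<Rightarrow> nat \<Rightarrow> ('g \<Rightarrow> complex mat) \<Rightarrow> complex mat" where
  "fourier G f n \<gamma> = mat n n (\<lambda>(i, j).
     (1 / of_nat (card (carrier G))) * (\<Sum>x\<in>carrier G. f x * \<gamma> x $$ (i, j)))"

end

theory Submission imports Defs begin

lemma mv_entry: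
  fixes M :: "complex mat"
  assumes "M \<in> carrier_mat n n" "w \<in> carrier_vec n" "i < n"
  shows "(M *\<^sub>v w) $ i = (\<Sum>j<n. M $$ (i,j) * w $ j)"
  using assms by (auto simp add: scalar_prod_def lessThan_atLeast0 intro!: sum.cong)

lemma mat_vec_sum_vec:
  fixes M :: "complex mat"
  assumes M: "M \<in> carrier_mat n n" and P: "\<And>x. x \<in> A \<Longrightarrow> P x \<in> carrier_vec n"
  shows "M *\<^sub>v vec n (\<lambda>j. c * (\<Sum>x\<in>A. P x $ j)) = vec n (\<lambda>i. c * (\<Sum>x\<in>A. (M *\<^sub>v P x) $ i))"
proof (rule eq_vecI)
  fix i assume i: "i < dim_vec (vec n (\<lambda>i. c * (\<Sum>x\<in>A. (M *\<^sub>v P x) $ i)))"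
  hence i: "i < n" by simp
  have "(M *\<^sub>v vec n (\<lambda>j. c * (\<Sum>x\<in>A. P x $ j))) $ i
     = (\<Sum>j<n. M $$ (i,j) * (c * (\<Sum>x\<in>A. P x $ j)))"
    using M i by (simp add: scalar_prod_def lessThan_atLeast0)
  also have "\<dots> = c * (\<Sum>x\<in>A. \<Sum>j<n. M $$ (i,j) * P x $ j)"
    by (simp add: sum_distrib_left sum.swap[of _ A] algebra_simps)
  also have "\<dots> = c * (\<Sum>x\<in>A. (M *\<^sub>v P x) $ i)"
    by (rule arg_cong[where f="\<lambda>t. c*t"], rule sum.cong[OF refl]) (metis mv_entry M P i)
  finally show "(M *\<^sub>v vec n (\<lambda>j. c * (\<Sum>x\<in>A. P x $ j))) $ i = vec n (\<lambda>i. c * (\<Sum>x\<in>A. (M *\<^sub>v P x) $ i)) $ i"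
    using i by simp
qed (use M in simp)

lemma fourier_mult:
  fixes G :: "('g, 'b) monoid_scheme"
  assumes fin: "finite (carrier G)" and AG: "A \<subseteq> carrier G"
    and gam: "\<And>x. x \<in> carrier G \<Longrightarrow> \<gamma> x \<in> carrier_mat n n"
    and v: "v \<in> carrier_vec n"
  shows "fourier G (\<lambda>x. of_bool (x \<in> A)) n \<gamma> *\<^sub>v v
    = vec n (\<lambda>i. (1 / of_nat (card (carrier G))) * (\<Sum>x\<in>A. (\<gamma> x *\<^sub>v v) $ i))"
proof (rule eq_vecI)
  fix i assume "i < dim_vec (vec n (\<lambda>i. (1 / of_nat (card (carrier G))) * (\<Sum>x\<in>A. (\<gamma> x *\<^sub>v v) $ i)))"
  hence i: "i < n" by simp
  define c :: complex where "c = 1 / of_nat (card (carrier G))"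
  have "(fourier G (\<lambda>x. of_bool (x \<in> A)) n \<gamma> *\<^sub>v v) $ i
     = (\<Sum>j<n. (c * (\<Sum>x\<in>carrier G. of_bool (x \<in> A) * \<gamma> x $$ (i, j))) * v $ j)"
    using i v by (simp add: fourier_def scalar_prod_def lessThan_atLeast0 c_def)
  also have "\<dots> = c * (\<Sum>x\<in>carrier G. of_bool (x \<in> A) * (\<Sum>j<n. \<gamma> x $$ (i, j) * v $ j))"
    by (simp add: sum_distrib_left sum_distrib_right sum.swap[of _ "carrier G"] algebra_simps)
  also have "\<dots> = c * (\<Sum>x\<in>carrier G \<inter> A. (\<Sum>j<n. \<gamma> x $$ (i, j) * v $ j))"
    unfolding sum.inter_restrict[OF fin] by (auto intro!: sum.cong arg_cong[where f="\<lambda>t. c*t"])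
  also have "carrier G \<inter> A = A" using AG by auto
  also have "c * (\<Sum>x\<in>A. (\<Sum>j<n. \<gamma> x $$ (i, j) * v $ j)) = c * (\<Sum>x\<in>A. (\<gamma> x *\<^sub>v v) $ i)"
    by (rule arg_cong[where f="\<lambda>t. c*t"], rule sum.cong[OF refl]) (metis mv_entry gam v i AG subsetD)
  finally show "(fourier G (\<lambda>x. of_bool (x \<in> A)) n \<gamma> *\<^sub>v v) $ i = vec n (\<lambda>i. (1 / of_nat (card (carrier G))) * (\<Sum>x\<in>A. (\<gamma> x *\<^sub>v v) $ i)) $ i"
    using i by (simp add: c_def)
qed (simp add: fourier_def)

lemma (in group) conj_bij:
  assumes AG: "A \<subseteq> carrier G" and nor: "\<forall>x\<in>carrier G. x <# A = A #> x"
    and g: "g \<in> carrier G" and fin: "finite A"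
  shows "bij_betw (\<lambda>x. g \<otimes> x \<otimes> inv g) A A"
proof -
  have sub: "(\<lambda>x. g \<otimes> x \<otimes> inv g) ` A \<subseteq> A"
  proof
    fix y assume "y \<in> (\<lambda>x. g \<otimes> x \<otimes> inv g) ` A"
    then obtain a where a: "a \<in> A" and y: "y = g \<otimes> a \<otimes> inv g" by auto
    have "g \<otimes> a \<in> g <# A" using a unfolding l_coset_def by auto
    hence "g \<otimes> a \<in> A #> g" using nor g by auto
    then obtain a' where a': "a' \<in> A" "g \<otimes> a = a' \<otimes> g" unfolding r_coset_def by auto
    have "y = a' \<otimes> g \<otimes> inv g" using y a' by simp
    also have "\<dots> = a'" using a' AG g by (simp add: m_assoc subsetD)
    finally show "y \<in> A" using a' by simp
  qed
  have inj: "inj_on (\<lambda>x. g \<otimes> x \<otimes> inv g) A"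
    by (rule inj_onI) (use AG g in \<open>auto simp: subsetD\<close>)
  have "(\<lambda>x. g \<otimes> x \<otimes> inv g) ` A = A"
    by (rule endo_inj_surj[OF fin sub inj])
  thus ?thesis using inj unfolding bij_betw_def by simp
qed

lemma mv_unit:
  fixes M :: "complex mat"
  assumes M: "M \<in> carrier_mat n n" and i: "i < n"
  shows "(M *\<^sub>v unit_vec n i) $ i = M $$ (i,i)"
  using i by (simp add: mv_entry[OF M unit_vec_carrier i] if_distrib cong: if_cong)

lemma gamma_one:
  assumes "group G" and rep: "unitary_rep G n \<gamma>"
  shows "\<gamma> \<one>\<^bsub>G\<^esub> = 1\<^sub>m n"
proof -
  interpret group G by fact
  define U where "U = \<gamma> \<one>\<^bsub>G\<^esub>"
  have U: "U \<in> carrier_mat n n" "mat_adjoint U * U = 1\<^sub>m n"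
    using rep unfolding unitary_rep_def unitary_mat_def U_def by auto
  have UU: "U = U * U" using rep unfolding unitary_rep_def U_def
    by (metis one_closed l_one)
  have Ad: "mat_adjoint U \<in> carrier_mat n n" using U(1) mat_of_rows_carrier(1)[of n "map conjugate (cols U)"] by (simp add: mat_adjoint_def)
  have "1\<^sub>m n = mat_adjoint U * (U * U)" using U(2) UU by simp
  also have "\<dots> = (mat_adjoint U * U) * U" using Ad U(1) by simp
  also have "\<dots> = U" using U by simp
  finally show ?thesis unfolding U_def by simp
qed

lemma trace_one: "mat_trace (1\<^sub>m n :: complex mat) = of_nat n"
  by (simp add: mat_trace_def)

lemma sum_induced:
  fixes G :: "('g, 'b) monoid_scheme"
  assumes gr: "group G" and fin: "finite (carrier G)" and AG: "A \<subseteq> carrier G"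
    and nor: "\<forall>x\<in>carrier G. x <#\<^bsub>G\<^esub> A = A #>\<^bsub>G\<^esub> x"
  shows "(\<Sum>x\<in>A. induced_char G H chi x)
     = of_nat (card (carrier G)) / of_nat (card H) * (\<Sum>x\<in>A \<inter> H. chi x)"
proof -
  interpret group G by fact
  have finA: "finite A" using AG fin finite_subset by auto
  define g where "g = (\<lambda>x. if x \<in> H then chi x else 0)"
  have inner: "(\<Sum>x\<in>A. g (inv\<^bsub>G\<^esub> y \<otimes>\<^bsub>G\<^esub> x \<otimes>\<^bsub>G\<^esub> y)) = (\<Sum>x\<in>A. g x)"
    if y: "y \<in> carrier G" for y
  proof -
    have b: "bij_betw (\<lambda>x. inv\<^bsub>G\<^esub> y \<otimes>\<^bsub>G\<^esub> x \<otimes>\<^bsub>G\<^esub> inv\<^bsub>G\<^esub> (inv\<^bsub>G\<^esub> y)) A A"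
      by (rule conj_bij[OF AG nor _ finA]) (use y in simp)
    have b': "bij_betw (\<lambda>x. inv\<^bsub>G\<^esub> y \<otimes>\<^bsub>G\<^esub> x \<otimes>\<^bsub>G\<^esub> y) A A"
      using b y by simp
    show ?thesis by (rule sum.reindex_bij_betw[OF b'])
  qed
  have "(\<Sum>x\<in>A. induced_char G H chi x)
      = (1 / of_nat (card H)) * (\<Sum>x\<in>A. \<Sum>y\<in>carrier G. g (inv\<^bsub>G\<^esub> y \<otimes>\<^bsub>G\<^esub> x \<otimes>\<^bsub>G\<^esub> y))"
    unfolding induced_char_def g_def by (simp add: sum_distrib_left)
  also have "\<dots> = (1 / of_nat (card H)) * (\<Sum>y\<in>carrier G. \<Sum>x\<in>A. g (inv\<^bsub>G\<^esub> y \<otimes>\<^bsub>G\<^esub> x \<otimes>\<^bsub>G\<^esub> y))"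
    by (simp add: sum.swap[of _ A])
  also have "\<dots> = (1 / of_nat (card H)) * (\<Sum>y\<in>carrier G. \<Sum>x\<in>A. g x)"
    using inner by simp
  also have "\<dots> = of_nat (card (carrier G)) / of_nat (card H) * (\<Sum>x\<in>A. g x)"
    by simp
  also have "(\<Sum>x\<in>A. g x) = (\<Sum>x\<in>A \<inter> H. chi x)"
    unfolding g_def by (simp add: sum.inter_restrict[OF finA])
  finally show ?thesis .
qed

lemma card_SA:
  fixes G :: "('g, 'b) monoid_scheme" (structure)
  assumes gr: "group G" and fin: "finite (carrier G)" and AG: "A \<subseteq> carrier G"
    and SG: "S \<subseteq> carrier G" and one: "\<one>\<^bsub>G\<^esub> \<in> S" and H: "subgroup H G"
    and s0: "s0 \<in> S" "s0 \<notin> H"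
  shows "2 * card (A \<inter> H) \<le> card (S <#>\<^bsub>G\<^esub> A)"
proof -
  interpret group G by fact
  have HG: "H \<subseteq> carrier G" using H subgroup.subset by blast
  have s0G: "s0 \<in> carrier G" using s0 SG by auto
  have sub1: "A \<inter> H \<subseteq> S <#> A"
  proof
    fix a assume "a \<in> A \<inter> H"
    hence "a = \<one> \<otimes> a" "a \<in> A" using AG by auto
    thus "a \<in> S <#> A" using one unfolding set_mult_def by blast
  qed
  have sub2: "(\<lambda>x. s0 \<otimes> x) ` (A \<inter> H) \<subseteq> S <#> A"
    using s0 unfolding set_mult_def by blast
  have disj: "(A \<inter> H) \<inter> (\<lambda>x. s0 \<otimes> x) ` (A \<inter> H) = {}"
  proof (rule ccontr)
    assume "(A \<inter> H) \<inter> (\<lambda>x. s0 \<otimes> x) ` (A \<inter> H) \<noteq> {}"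
    then obtain a b where ab: "a \<in> H" "b \<in> H" "b = s0 \<otimes> a" by auto
    have aG: "a \<in> carrier G" using ab HG by auto
    have "b \<otimes> inv a = s0" using ab aG s0G by (simp add: m_assoc)
    moreover have "b \<otimes> inv a \<in> H" using ab H by (simp add: subgroup.m_closed subgroup.m_inv_closed)
    ultimately show False using s0 by simp
  qed
  have inj: "inj_on (\<lambda>x. s0 \<otimes> x) (A \<inter> H)"
    by (rule inj_onI) (use AG s0G in \<open>auto simp: subsetD\<close>)
  have SAfin: "finite (S <#> A)"
    by (rule finite_subset[OF _ fin]) (use AG SG in \<open>auto simp: set_mult_def subsetD\<close>)
  have finAH: "finite (A \<inter> H)" using AG fin finite_subset by auto
  have "2 * card (A \<inter> H) = card ((A \<inter> H) \<union> (\<lambda>x. s0 \<otimes> x) ` (A \<inter> H))"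
    using card_Un_disjoint[OF finAH _ disj] card_image[OF inj] finAH by simp
  also have "\<dots> \<le> card (S <#> A)"
    by (rule card_mono[OF SAfin]) (use sub1 sub2 in auto)
  finally show ?thesis .
qed

lemma lemma6p2_aux:
  fixes G :: "('g, 'b) monoid_scheme" (structure) and S A :: "'g set"
    and \<gamma> :: "'g \<Rightarrow> complex mat" and n :: nat
  assumes "group G" and "finite (carrier G)"
    and "S \<subseteq> carrier G" and "generate G S = carrier G" and "\<one>\<^bsub>G\<^esub> \<in> S"
    and "irreducible_rep G n \<gamma>" and "monomial_rep G n \<gamma>"
    and "A \<subseteq> carrier G"
    and "(\<lambda>a. inv\<^bsub>G\<^esub> a) ` A = A"
    and "\<forall>x\<in>carrier G. x <#\<^bsub>G\<^esub> A = A #>\<^bsub>G\<^esub> x"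
    and "2 * spectral_radius (fourier G (\<lambda>x. of_bool (x \<in> A)) n \<gamma>)
           > real (card (S <#>\<^bsub>G\<^esub> A)) / real (card (carrier G))"
  shows "n = 1"
proof (rule ccontr)
  assume n1: "n \<noteq> 1"
  note gr = assms(1) and fin = assms(2) and SG = assms(3) and gen = assms(4) and one = assms(5)
    and irr = assms(6) and mono = assms(7) and AG = assms(8) and nor = assms(10) and big = assms(11)
  interpret group G by fact
  have rep: "unitary_rep G n \<gamma>" and npos: "n > 0"
    and irrW: "\<And>W. invariant_subspace G n \<gamma> W \<Longrightarrow> W = {0\<^sub>v n} \<or> W = carrier_vec n"
    using irr unfolding irreducible_rep_def by auto
  have gam: "\<And>x. x \<in> carrier G \<Longrightarrow> \<gamma> x \<in> carrier_mat n n"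
    using rep unfolding unitary_rep_def unitary_mat_def by auto
  have hom: "\<And>x y. x \<in> carrier G \<Longrightarrow> y \<in> carrier G \<Longrightarrow> \<gamma> (x \<otimes> y) = \<gamma> x * \<gamma> y"
    using rep unfolding unitary_rep_def by auto
  obtain H chi where H: "subgroup H G" and chin: "\<forall>h\<in>H. cmod (chi h) = 1"
    and chim: "\<forall>a\<in>H. \<forall>b\<in>H. chi (a \<otimes> b) = chi a * chi b"
    and tr: "\<forall>x\<in>carrier G. mat_trace (\<gamma> x) = induced_char G H chi x"
    using mono unfolding monomial_rep_def by auto
  have HG: "H \<subseteq> carrier G" using H subgroup.subset by blast
  have finH: "finite H" using HG fin finite_subset by auto
  have cardH: "card H > 0" using finH H subgroup.one_closed by (metis card_gt_0_iff empty_iff)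
  have cardG: "card (carrier G) > 0" using fin one_closed by (auto simp add: card_gt_0_iff)
  have finA: "finite A" using AG fin finite_subset by auto
  have one_H: "\<one> \<in> H" using H subgroup.one_closed by blast
  have chi1: "chi \<one> = 1"
  proof -
    have "chi \<one> = chi \<one> * chi \<one>" using chim one_H by (metis l_one one_closed)
    moreover have "chi \<one> \<noteq> 0" using chin one_H by force
    ultimately show ?thesis by (metis mult_cancel_right1)
  qed
  have n_eq: "(of_nat n :: complex) = of_nat (card (carrier G)) / of_nat (card H)"
  proof -
    have "of_nat n = mat_trace (\<gamma> \<one>)" using gamma_one[OF gr rep] trace_one by simp
    also have "\<dots> = induced_char G H chi \<one>" using tr by simp
    also have "\<dots> = (1 / of_nat (card H)) * (\<Sum>y\<in>carrier G. 1)"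
      unfolding induced_char_def using one_H chi1
      by (intro arg_cong[where f="\<lambda>t. (1 / of_nat (card H)) * t"] sum.cong) auto
    finally show ?thesis by simp
  qed
  have Hprop: "H \<noteq> carrier G"
  proof
    assume "H = carrier G"
    hence "(of_nat n :: complex) = 1" using n_eq cardG by simp
    thus False using n1 by simp
  qed
  obtain s0 where s0: "s0 \<in> S" "s0 \<notin> H"
  proof (rule ccontr)
    assume "\<not> thesis"
    hence "S \<subseteq> H" using that by blast
    hence "generate G S \<subseteq> H" using generate_subgroup_incl H by blast
    thus False using gen HG Hprop by simp
  qed
  have SA: "2 * card (A \<inter> H) \<le> card (S <#> A)"
    by (rule card_SA[OF gr fin AG SG one H s0])
  define c :: complex where "c = 1 / of_nat (card (carrier G))"
  define F where "F = fourier G (\<lambda>x. of_bool (x \<in> A)) n \<gamma>"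
  have Fc: "F \<in> carrier_mat n n" unfolding F_def fourier_def by simp
  define Fv where "Fv = (\<lambda>v. vec n (\<lambda>i. c * (\<Sum>x\<in>A. (\<gamma> x *\<^sub>v v) $ i)))"
  have FFv: "\<And>v. v \<in> carrier_vec n \<Longrightarrow> F *\<^sub>v v = Fv v"
    unfolding F_def Fv_def c_def by (rule fourier_mult[OF fin AG gam])
  have comm: "\<gamma> g *\<^sub>v (F *\<^sub>v v) = F *\<^sub>v (\<gamma> g *\<^sub>v v)"
    if g: "g \<in> carrier G" and v: "v \<in> carrier_vec n" for g v
  proof -
    have gv: "\<gamma> g *\<^sub>v v \<in> carrier_vec n" using gam[OF g] v by simp
    have "\<gamma> g *\<^sub>v (F *\<^sub>v v) = vec n (\<lambda>i. c * (\<Sum>x\<in>A. (\<gamma> g *\<^sub>v (\<gamma> x *\<^sub>v v)) $ i))"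
      unfolding FFv[OF v] Fv_def
      by (rule mat_vec_sum_vec[OF gam[OF g]]) (use gam v AG in \<open>auto intro: mult_mat_vec_carrier\<close>)
    also have "\<dots> = vec n (\<lambda>i. c * (\<Sum>x\<in>A. (\<gamma> (g \<otimes> x) *\<^sub>v v) $ i))"
    proof -
      have "\<And>x. x \<in> A \<Longrightarrow> \<gamma> g *\<^sub>v (\<gamma> x *\<^sub>v v) = \<gamma> (g \<otimes> x) *\<^sub>v v"
        using hom g gam v AG by (metis assoc_mult_mat_vec subsetD)
      thus ?thesis by simp
    qed
    also have "\<dots> = vec n (\<lambda>i. c * (\<Sum>x\<in>A. (\<gamma> (x \<otimes> g) *\<^sub>v v) $ i))"
    proof -
      have b: "bij_betw (\<lambda>x. g \<otimes> x \<otimes> inv g) A A" by (rule conj_bij[OF AG nor g finA])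
      have "(\<Sum>x\<in>A. (\<gamma> (x \<otimes> g) *\<^sub>v v) $ i) = (\<Sum>x\<in>A. (\<gamma> (g \<otimes> x) *\<^sub>v v) $ i)" for i
      proof -
        have "(\<Sum>x\<in>A. (\<gamma> (x \<otimes> g) *\<^sub>v v) $ i) = (\<Sum>x\<in>A. (\<gamma> ((g \<otimes> x \<otimes> inv g) \<otimes> g) *\<^sub>v v) $ i)"
          by (rule sum.reindex_bij_betw[OF b, symmetric])
        also have "\<dots> = (\<Sum>x\<in>A. (\<gamma> (g \<otimes> x) *\<^sub>v v) $ i)"
          using g AG by (intro sum.cong refl) (simp add: m_assoc subsetD)
        finally show ?thesis .
      qed
      thus ?thesis by simp
    qed
    also have "\<dots> = vec n (\<lambda>i. c * (\<Sum>x\<in>A. (\<gamma> x *\<^sub>v (\<gamma> g *\<^sub>v v)) $ i))"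
    proof -
      have "\<And>x. x \<in> A \<Longrightarrow> \<gamma> x *\<^sub>v (\<gamma> g *\<^sub>v v) = \<gamma> (x \<otimes> g) *\<^sub>v v"
        using hom g gam v AG by (metis assoc_mult_mat_vec subsetD)
      thus ?thesis by simp
    qed
    also have "\<dots> = F *\<^sub>v (\<gamma> g *\<^sub>v v)" unfolding FFv[OF gv] Fv_def ..
    finally show ?thesis .
  qed
  from spectral_radius_mem_max(1)[OF Fc npos]
  obtain \<mu> where mu: "eigenvalue F \<mu>" and sr: "spectral_radius F = cmod \<mu>"
    unfolding spectrum_def by auto
  then obtain w where w: "w \<in> carrier_vec n" "w \<noteq> 0\<^sub>v n" "F *\<^sub>v w = \<mu> \<cdot>\<^sub>v w"
    unfolding eigenvalue_def eigenvector_def using Fc by auto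
  define W where "W = {v \<in> carrier_vec n. F *\<^sub>v v = \<mu> \<cdot>\<^sub>v v}"
  have inv: "invariant_subspace G n \<gamma> W"
    unfolding invariant_subspace_def
  proof (intro conjI ballI allI)
    show "W \<subseteq> carrier_vec n" unfolding W_def by auto
    show "0\<^sub>v n \<in> W" unfolding W_def using Fc by auto
    fix v assume v: "v \<in> W"
    hence vc: "v \<in> carrier_vec n" and Fvv: "F *\<^sub>v v = \<mu> \<cdot>\<^sub>v v" unfolding W_def by auto
    {
      fix u assume "u \<in> W"
      hence uc: "u \<in> carrier_vec n" and Fuu: "F *\<^sub>v u = \<mu> \<cdot>\<^sub>v u" unfolding W_def by auto
      have "F *\<^sub>v (v + u) = \<mu> \<cdot>\<^sub>v (v + u)"
        using Fc vc uc Fvv Fuu by (simp add: mult_add_distrib_mat_vec smult_add_distrib_vec)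
      thus "v + u \<in> W" unfolding W_def using vc uc by auto
    }
    {
      fix a :: complex
      have "F *\<^sub>v (a \<cdot>\<^sub>v v) = \<mu> \<cdot>\<^sub>v (a \<cdot>\<^sub>v v)"
        using Fc vc Fvv by (simp add: mult_mat_vec smult_smult_assoc mult.commute)
      thus "a \<cdot>\<^sub>v v \<in> W" unfolding W_def using vc by auto
    }
    {
      fix x assume x: "x \<in> carrier G"
      have "F *\<^sub>v (\<gamma> x *\<^sub>v v) = \<mu> \<cdot>\<^sub>v (\<gamma> x *\<^sub>v v)"
        using comm[OF x vc] Fvv mult_mat_vec[OF gam[OF x] vc] by simp
      thus "\<gamma> x *\<^sub>v v \<in> W" unfolding W_def using vc gam[OF x] by auto
    }
  qed
  have "w \<in> W" unfolding W_def using w by auto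
  hence Wall: "W = carrier_vec n" using irrW[OF inv] w(2) by auto
  have diag: "c * (\<Sum>x\<in>A. \<gamma> x $$ (i,i)) = \<mu>" if i: "i < n" for i
  proof -
    have "unit_vec n i \<in> W" using Wall by simp
    hence "(F *\<^sub>v unit_vec n i) $ i = \<mu>" unfolding W_def using i by simp
    moreover have "(F *\<^sub>v unit_vec n i) $ i = c * (\<Sum>x\<in>A. \<gamma> x $$ (i,i))"
      unfolding FFv[OF unit_vec_carrier] Fv_def using i gam AG
      by (simp add: mv_unit subsetD)
    ultimately show ?thesis by simp
  qed
  have "of_nat n * \<mu> = c * (\<Sum>x\<in>A. mat_trace (\<gamma> x))"
  proof -
    have "of_nat n * \<mu> = (\<Sum>i<n. c * (\<Sum>x\<in>A. \<gamma> x $$ (i,i)))" using diag by simp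
    also have "\<dots> = c * (\<Sum>x\<in>A. \<Sum>i<n. \<gamma> x $$ (i,i))"
      by (simp add: sum_distrib_left sum.swap[of _ A])
    also have "\<dots> = c * (\<Sum>x\<in>A. mat_trace (\<gamma> x))"
      unfolding mat_trace_def using gam AG by (intro arg_cong[where f="\<lambda>t. c*t"] sum.cong) (auto simp: subsetD)
    finally show ?thesis .
  qed
  also have "(\<Sum>x\<in>A. mat_trace (\<gamma> x)) = (\<Sum>x\<in>A. induced_char G H chi x)"
    using tr AG by (intro sum.cong) (auto simp: subsetD)
  also have "\<dots> = of_nat (card (carrier G)) / of_nat (card H) * (\<Sum>x\<in>A \<inter> H. chi x)"
    by (rule sum_induced[OF gr fin AG nor])
  finally have "of_nat n * \<mu> = c * (of_nat n * (\<Sum>x\<in>A \<inter> H. chi x))" using n_eq by simp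
  hence mueq: "\<mu> = c * (\<Sum>x\<in>A \<inter> H. chi x)" using npos by simp
  have "cmod (\<Sum>x\<in>A \<inter> H. chi x) \<le> (\<Sum>x\<in>A \<inter> H. cmod (chi x))" by (rule norm_sum)
  also have "\<dots> = real (card (A \<inter> H))" using chin by simp
  finally have sbound: "cmod (\<Sum>x\<in>A \<inter> H. chi x) \<le> real (card (A \<inter> H))" .
  have "spectral_radius F = cmod (\<Sum>x\<in>A \<inter> H. chi x) / real (card (carrier G))"
    using sr mueq unfolding c_def by (simp add: norm_divide)
  also have "\<dots> \<le> real (card (A \<inter> H)) / real (card (carrier G))"
    using sbound cardG by (simp add: divide_right_mono)
  finally have "2 * spectral_radius F \<le> real (2 * card (A \<inter> H)) / real (card (carrier G))"
    by (simp add: field_simps)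
  also have "\<dots> \<le> real (card (S <#> A)) / real (card (carrier G))"
    using SA cardG by (simp add: divide_right_mono)
  finally show False using big unfolding F_def by simp
qed


theorem lemma6p2:
  fixes G :: "('g, 'b) monoid_scheme" and S A :: "'g set"
    and \<gamma> :: "'g \<Rightarrow> complex mat" and n :: nat
  assumes "group G" and "finite (carrier G)"
    and "S \<subseteq> carrier G" and "generate G S = carrier G" and "\<one>\<^bsub>G\<^esub> \<in> S"
    and "irreducible_rep G n \<gamma>" and "monomial_rep G n \<gamma>"
    and "A \<subseteq> carrier G"
    and "(\<lambda>a. inv\<^bsub>G\<^esub> a) ` A = A"
    and "\<forall>x\<in>carrier G. x <#\<^bsub>G\<^esub> A = A #>\<^bsub>G\<^esub> x"
    and "2 * spectral_radius (fourier G (\<lambda>x. of_bool (x \<in> A)) n \<gamma>)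
           > real (card (S <#>\<^bsub>G\<^esub> A)) / real (card (carrier G))"
  shows "n = 1"
  using assms by (rule lemma6p2_aux)

end
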